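(* Let $\mathcal H_S,\mathcal H_M$ be finite-dimensional complex Hilbert spaces and let $\Psi=\sum_{t\in D}\mu_t\,\phi_t\otimes\lambda_t$ be a unit vector in $\mathcal H_S\otimes\mathcal H_M$, with $D$ finite, unit vectors $\phi_t\in\mathcal H_S$, $\lambda_t\in\mathcal H_M$, and nonzero complex numbers $\mu_t$. (a) If the $\{\lambda_j\}_{j\in D}$ are orthonormal, then the $\{\phi_j\}_{j\in D}$ are fully distinguishable relative to $M$ (with witnessing family $b_j=\lambda_j$); explicitly $\Pr(q\mid\lambda_j)=|\langle q|\phi_j\rangle|^2$ for all unit $q\in\mathcal H_S$. (b) If the $\{\phi_j\}_{j\in D}$ are linearly independent and fully distinguishable relative to $M$, then the $\{\lambda_j\}_{j\in D}$ are orthonormal.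
   Context: For the pure joint state $\Psi$ with reduced states $\rho_S=\mathrm{Tr}_M|\Psi\rangle\langle\Psi|$, $\rho_M=\mathrm{Tr}_S|\Psi\rangle\langle\Psi|$, and unit vectors $q\in\mathcal H_S$, $b\in\mathcal H_M$: $\Pr(b)=\langle b|\rho_M|b\rangle$, $\Pr(q\wedge b)=|\langle q\otimes b|\Psi\rangle|^2$, $\Pr(q\mid b)=\Pr(q\wedge b)/\Pr(b)$ when $\Pr(b)>0$. The family $\{\phi_j\}_{j\in D}$ is fully distinguishable relative to $M$ iff there exists an orthonormal family $\{b_j\}_{j\in D}$ in $\mathcal H_M$ which is probability-complete, i.e. $\sum_{j\in D}\Pr(b_j)=1$, with $\Pr(b_j)>0$ and $\Pr(q\mid b_j)=|\langle q|\phi_j\rangle|^2$ for every $j\in D$ and every unit vector $q\in\mathcal H_S$. *)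

theory Defs
  imports "HOL-Analysis.Analysis"
begin

text \<open>Finite-dimensional complex Hilbert spaces are modelled concretely as
  complex coordinate spaces: H_S = complex^'s, H_M = complex^'m, and the tensor
  product H_S (x) H_M = complex^('s x 'm).\<close>

definition cinner :: "complex ^ 'n::finite \<Rightarrow> complex ^ 'n::finite \<Rightarrow> complex" where
  "cinner u v = (\<Sum>i\<in>UNIV. cnj (u $ i) * v $ i)"

definition unit_vec :: "complex ^ 'n::finite \<Rightarrow> bool" where
  "unit_vec v \<longleftrightarrow> cinner v v = 1"

definition tensor :: "complex ^ 's \<Rightarrow> complex ^ 'm \<Rightarrow> complex ^ ('s::finite \<times> 'm::finite)" where
  "tensor x y = (\<chi> p. x $ fst p * y $ snd p)"

definition orthonormal_on :: "'d set \<Rightarrow> ('d \<Rightarrow> complex ^ 'n::finite) \<Rightarrow> bool" where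
  "orthonormal_on D b \<longleftrightarrow> (\<forall>i\<in>D. \<forall>j\<in>D. cinner (b i) (b j) = (if i = j then 1 else 0))"

definition lin_indep_on :: "'d set \<Rightarrow> ('d \<Rightarrow> complex ^ 'n::finite) \<Rightarrow> bool" where
  "lin_indep_on D f \<longleftrightarrow>
     (\<forall>c. (\<Sum>j\<in>D. c j *s f j) = 0 \<longrightarrow> (\<forall>j\<in>D. c j = 0))"

text \<open>Reduced state on M: rho_M = Tr_S |Psi><Psi|.\<close>
definition rho_M :: "complex ^ ('s::finite \<times> 'm::finite) \<Rightarrow> complex ^ 'm ^ 'm" where
  "rho_M \<Psi> = (\<chi> j k. \<Sum>i\<in>(UNIV::'s set). \<Psi> $ (i, j) * cnj (\<Psi> $ (i, k)))"

text \<open>Pr(b) = <b|rho_M|b> (a real number, since rho_M is Hermitian).\<close>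
definition Pr_M :: "complex ^ ('s::finite \<times> 'm::finite) \<Rightarrow> complex ^ 'm \<Rightarrow> real" where
  "Pr_M \<Psi> b = Re (cinner b (rho_M \<Psi> *v b))"

definition Pr_joint :: "complex ^ ('s::finite \<times> 'm::finite) \<Rightarrow> complex ^ 's \<Rightarrow> complex ^ 'm \<Rightarrow> real" where
  "Pr_joint \<Psi> q b = (cmod (cinner (tensor q b) \<Psi>))\<^sup>2"

text \<open>Pr(q | b) = Pr(q and b) / Pr(b) (used only when Pr(b) > 0).\<close>
definition Pr_cond :: "complex ^ ('s::finite \<times> 'm::finite) \<Rightarrow> complex ^ 's \<Rightarrow> complex ^ 'm \<Rightarrow> real" where
  "Pr_cond \<Psi> q b = Pr_joint \<Psi> q b / Pr_M \<Psi> b"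

definition fd_witness ::
  "complex ^ ('s::finite \<times> 'm::finite) \<Rightarrow> 'd set \<Rightarrow> ('d \<Rightarrow> complex ^ 's) \<Rightarrow> ('d \<Rightarrow> complex ^ 'm) \<Rightarrow> bool" where
  "fd_witness \<Psi> D \<phi> b \<longleftrightarrow>
     orthonormal_on D b \<and>
     (\<Sum>j\<in>D. Pr_M \<Psi> (b j)) = 1 \<and>
     (\<forall>j\<in>D. Pr_M \<Psi> (b j) > 0 \<and>
        (\<forall>q. unit_vec q \<longrightarrow> Pr_cond \<Psi> q (b j) = (cmod (cinner q (\<phi> j)))\<^sup>2))"

definition fully_distinguishable ::
  "complex ^ ('s::finite \<times> 'm::finite) \<Rightarrow> 'd set \<Rightarrow> ('d \<Rightarrow> complex ^ 's) \<Rightarrow> ('m::finite) itself \<Rightarrow> bool" where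
  "fully_distinguishable \<Psi> D \<phi> _ \<longleftrightarrow> (\<exists>b :: 'd \<Rightarrow> complex ^ 'm. fd_witness \<Psi> D \<phi> b)"

end

theory Submission
  imports Defs
begin

definition pv :: "complex ^ 'm \<Rightarrow> complex ^ ('s::finite \<times> 'm::finite) \<Rightarrow> complex ^ 's" where
  "pv b X = (\<chi> i. \<Sum>k\<in>UNIV. cnj (b $ k) * X $ (i, k))"

lemma cinner_sum_right: "cinner u (sum f D) = (\<Sum>t\<in>D. cinner u (f t))"
  unfolding cinner_def by (simp add: sum_component sum_distrib_left) (rule sum.swap)

lemma cinner_sum_left: "cinner (sum f D) v = (\<Sum>t\<in>D. cinner (f t) v)"
  unfolding cinner_def by (simp add: sum_component cnj_sum sum_distrib_right) (rule sum.swap)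

lemma cinner_scale_right: "cinner u (c *s v) = c * cinner u v"
  unfolding cinner_def by (simp add: sum_distrib_left mult_ac)

lemma cinner_scale_left: "cinner (c *s u) v = cnj c * cinner u v"
  unfolding cinner_def by (simp add: sum_distrib_left mult_ac)

lemma cinner_diff_right: "cinner u (v - w) = cinner u v - cinner u w"
  unfolding cinner_def by (simp add: algebra_simps sum_subtractf)

lemma cinner_diff_left: "cinner (v - w) u = cinner v u - cinner w u"
  unfolding cinner_def by (simp add: algebra_simps sum_subtractf)

lemma cinner_add_right: "cinner u (v + w) = cinner u v + cinner u w"
  unfolding cinner_def by (simp add: algebra_simps sum.distrib)

lemma cinner_cnj: "cnj (cinner u v) = cinner v u"
  unfolding cinner_def by (simp add: cnj_sum mult_ac)

lemma cinner_self: "cinner v v = of_real (\<Sum>i\<in>UNIV. (cmod (v $ i))\<^sup>2)"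
proof -
  have "cinner v v = (\<Sum>i\<in>UNIV. complex_of_real ((cmod (v $ i))\<^sup>2))"
    unfolding cinner_def
    apply (rule sum.cong[OF refl])
    apply (subst mult.commute)
    apply (rule complex_norm_square[symmetric])
    done
  also have "\<dots> = of_real (\<Sum>i\<in>UNIV. (cmod (v $ i))\<^sup>2)"
    by (rule of_real_sum[symmetric])
  finally show ?thesis .
qed

lemma cinner_self_real: "of_real (Re (cinner v v)) = cinner v v"
  by (simp add: cinner_self)

lemma cinner_self_eq0: "cinner v v = 0 \<longleftrightarrow> v = 0"
proof
  assume "cinner v v = 0"
  then have "(\<Sum>i\<in>UNIV. (cmod (v $ i))\<^sup>2) = 0" by (simp only: cinner_self of_real_eq_0_iff)
  then have "\<forall>i. (cmod (v $ i))\<^sup>2 = 0" by (subst (asm) sum_nonneg_eq_0_iff) auto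
  then show "v = 0" by (simp add: vec_eq_iff)
qed (simp add: cinner_def)

lemma sum_UNIV_pair: "(\<Sum>p\<in>UNIV. f p) = (\<Sum>i\<in>UNIV. \<Sum>k\<in>UNIV. f (i,k))"
proof -
  have "(\<Sum>i\<in>UNIV. \<Sum>k\<in>UNIV. f (i,k)) = (\<Sum>(i,k)\<in>UNIV\<times>UNIV. f(i,k))"
    by (rule sum.cartesian_product)
  then show ?thesis by (simp add: UNIV_Times_UNIV)
qed

lemma pv_tensor_cinner: "cinner (tensor q b) X = cinner q (pv b X)"
proof -
  have "cinner (tensor q b) X = (\<Sum>i\<in>UNIV. \<Sum>k\<in>UNIV. cnj (q $ i) * (cnj (b $ k) * X $ (i, k)))"
    unfolding cinner_def tensor_def sum_UNIV_pair
    by (simp add: mult_ac)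
  also have "\<dots> = cinner q (pv b X)"
    unfolding cinner_def pv_def by (simp add: sum_distrib_left)
  finally show ?thesis .
qed

lemma pv_Pr_M: "cinner b (rho_M X *v b) = cinner (pv b X) (pv b X)"
proof -
  have "cinner b (rho_M X *v b) = (\<Sum>j\<in>UNIV. \<Sum>k\<in>UNIV. \<Sum>i\<in>UNIV. cnj (b $ j) * b $ k * X $ (i, j) * cnj (X $ (i, k)))"
    unfolding cinner_def rho_M_def matrix_vector_mult_def
    by (simp add: sum_distrib_left sum_distrib_right mult_ac)
  also have "\<dots> = (\<Sum>i\<in>UNIV. \<Sum>j\<in>UNIV. \<Sum>k\<in>UNIV. cnj (b $ j) * b $ k * X $ (i, j) * cnj (X $ (i, k)))"
    by (rule trans[OF sum.cong[OF refl sum.swap] sum.swap])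
  also have "\<dots> = cinner (pv b X) (pv b X)"
    unfolding cinner_def pv_def
    by (simp add: cnj_sum sum_distrib_left sum_distrib_right mult_ac)
  finally show ?thesis .
qed

lemma pv_sum: "pv b (sum f D) = (\<Sum>t\<in>D. pv b (f t))"
  unfolding pv_def by (simp add: vec_eq_iff sum_component sum_distrib_left) (rule allI, rule sum.swap)

lemma pv_scale: "pv b (c *s X) = c *s pv b X"
  unfolding pv_def by (simp add: vec_eq_iff sum_distrib_left mult_ac)

lemma pv_tensor: "pv b (tensor c d) = cinner b d *s c"
  unfolding pv_def tensor_def cinner_def by (simp add: vec_eq_iff sum_distrib_left mult_ac)

lemma cinner_tensor: "cinner (tensor a b) (tensor c d) = cinner a c * cinner b d"
  unfolding pv_tensor_cinner pv_tensor cinner_scale_right by (rule mult.commute)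

lemma tensor_scale_left: "tensor (c *s a) b = c *s tensor a b"
  unfolding tensor_def by (simp add: vec_eq_iff mult_ac)

lemma cinner_axis: "cinner (axis k 1) y = y $ k"
proof -
  have "cinner (axis k 1) y = (\<Sum>i\<in>UNIV. if i = k then y $ i else 0)"
    unfolding cinner_def axis_def by (intro sum.cong) auto
  then show ?thesis by simp
qed

lemma Pr_M_pv: "Pr_M X b = Re (cinner (pv b X) (pv b X))"
  by (simp add: Pr_M_def pv_Pr_M)

lemma Pr_joint_pv: "Pr_joint X q b = (cmod (cinner q (pv b X)))\<^sup>2"
  by (simp add: Pr_joint_def pv_tensor_cinner)

lemma pv_Psi: "pv b (\<Sum>t\<in>D. \<mu> t *s tensor (\<phi> t) (lam t)) = (\<Sum>t\<in>D. (\<mu> t * cinner b (lam t)) *s \<phi> t)"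
  unfolding pv_sum pv_scale pv_tensor vector_smult_assoc ..

lemma cs_lemma:
  fixes \<phi> v :: "complex ^ 'n::finite"
  assumes u: "unit_vec \<phi>" and h: "\<And>q. unit_vec q \<Longrightarrow> cinner q \<phi> = 0 \<Longrightarrow> cinner q v = 0"
  shows "v = cinner \<phi> v *s \<phi>"
proof (rule ccontr)
  define a where "a = cinner \<phi> v"
  define w where "w = v - a *s \<phi>"
  assume "v \<noteq> cinner \<phi> v *s \<phi>"
  then have wne: "w \<noteq> 0" by (simp add: w_def a_def)
  have pp: "cinner \<phi> \<phi> = 1" using u by (simp add: unit_vec_def)
  have wphi: "cinner \<phi> w = 0" by (simp add: w_def cinner_diff_right cinner_scale_right pp a_def)
  have wphi2: "cinner w \<phi> = 0" using wphi cinner_cnj[of \<phi> w] by simp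
  define n where "n = Re (cinner w w)"
  have nw: "cinner w w = of_real n" by (simp add: n_def cinner_self_real)
  have "n \<ge> 0" unfolding n_def cinner_self by (simp add: sum_nonneg)
  moreover have "n \<noteq> 0" using nw wne cinner_self_eq0[of w] by auto
  ultimately have npos: "n > 0" by simp
  define r where "r = 1 / sqrt n"
  define q where "q = complex_of_real r *s w"
  have "cinner q q = of_real (r * r * n)"
    by (simp add: q_def cinner_scale_left cinner_scale_right nw)
  also have "r * r * n = 1" using npos unfolding r_def
    by (simp add: field_simps)
  finally have uq: "unit_vec q" by (simp add: unit_vec_def)
  have "cinner q \<phi> = 0" by (simp add: q_def cinner_scale_left wphi2)
  then have "cinner q v = 0" using h uq by blast
  moreover have "v = w + a *s \<phi>" by (simp add: w_def)
  then have "cinner q v = of_real r * cinner w w"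
    by (simp add: q_def cinner_scale_left cinner_add_right cinner_scale_right wphi2)
  moreover have "r \<noteq> 0" using npos by (simp add: r_def)
  moreover have "cinner w w \<noteq> 0" using wne cinner_self_eq0[of w] by blast
  ultimately show False by simp
qed


lemma partA:
  fixes \<Psi> :: "complex ^ ('s::finite \<times> 'm::finite)"
    and D :: "'d set" and \<phi> :: "'d \<Rightarrow> complex ^ 's" and lam :: "'d \<Rightarrow> complex ^ 'm" and \<mu> :: "'d \<Rightarrow> complex"
  assumes fin: "finite D"
    and uphi: "\<And>t. t \<in> D \<Longrightarrow> unit_vec (\<phi> t)"
    and mu: "\<And>t. t \<in> D \<Longrightarrow> \<mu> t \<noteq> 0"
    and Psi: "\<Psi> = (\<Sum>t\<in>D. \<mu> t *s tensor (\<phi> t) (lam t))"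
    and uPsi: "unit_vec \<Psi>"
    and on: "orthonormal_on D lam"
  shows "fd_witness \<Psi> D \<phi> lam"
proof -
  have pvj: "pv (lam j) \<Psi> = \<mu> j *s \<phi> j" if j: "j \<in> D" for j
  proof -
    have "pv (lam j) \<Psi> = (\<Sum>t\<in>D. (\<mu> t * cinner (lam j) (lam t)) *s \<phi> t)"
      unfolding Psi by (rule pv_Psi)
    also have "\<dots> = (\<Sum>t\<in>D. if t = j then \<mu> j *s \<phi> j else 0)"
      using on j unfolding orthonormal_on_def by (intro sum.cong refl) auto
    also have "\<dots> = \<mu> j *s \<phi> j" using fin j by simp
    finally show ?thesis .
  qed
  have PrM: "Pr_M \<Psi> (lam j) = (cmod (\<mu> j))\<^sup>2" if j: "j \<in> D" for j
  proof -
    have "cinner (\<phi> j) (\<phi> j) = 1" using uphi j by (simp add: unit_vec_def)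
    then have "cinner (pv (lam j) \<Psi>) (pv (lam j) \<Psi>) = cnj (\<mu> j) * \<mu> j"
      using pvj[OF j] by (simp add: cinner_scale_left cinner_scale_right)
    also have "\<dots> = of_real ((cmod (\<mu> j))\<^sup>2)"
      by (subst mult.commute, rule complex_norm_square[symmetric])
    finally show ?thesis by (simp add: Pr_M_pv)
  qed
  have cond: "Pr_cond \<Psi> q (lam j) = (cmod (cinner q (\<phi> j)))\<^sup>2" if j: "j \<in> D" for j q
  proof -
    have "Pr_joint \<Psi> q (lam j) = (cmod (\<mu> j))\<^sup>2 * (cmod (cinner q (\<phi> j)))\<^sup>2"
      by (simp add: Pr_joint_pv pvj[OF j] cinner_scale_right norm_mult power_mult_distrib)
    then show ?thesis using mu[OF j] by (simp add: Pr_cond_def PrM[OF j])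
  qed
  have "cinner \<Psi> \<Psi> = (\<Sum>t\<in>D. cinner (\<mu> t *s tensor (\<phi> t) (lam t)) \<Psi>)"
    by (subst (1) Psi, rule cinner_sum_left)
  also have "\<dots> = (\<Sum>t\<in>D. of_real ((cmod (\<mu> t))\<^sup>2))"
  proof (intro sum.cong refl)
    fix t assume t: "t \<in> D"
    have "cinner (\<phi> t) (\<phi> t) = 1" using uphi t by (simp add: unit_vec_def)
    then have "cinner (\<mu> t *s tensor (\<phi> t) (lam t)) \<Psi> = cnj (\<mu> t) * \<mu> t"
      by (simp add: cinner_scale_left pv_tensor_cinner pvj[OF t] cinner_scale_right)
    also have "\<dots> = of_real ((cmod (\<mu> t))\<^sup>2)"
      by (subst mult.commute, rule complex_norm_square[symmetric])
    finally show "cinner (\<mu> t *s tensor (\<phi> t) (lam t)) \<Psi> = of_real ((cmod (\<mu> t))\<^sup>2)" .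
  qed
  finally have eq: "cinner \<Psi> \<Psi> = (\<Sum>t\<in>D. complex_of_real ((cmod (\<mu> t))\<^sup>2))" .
  have "complex_of_real (\<Sum>t\<in>D. (cmod (\<mu> t))\<^sup>2) = 1"
    using uPsi eq unfolding unit_vec_def of_real_sum by simp
  then have "(\<Sum>t\<in>D. (cmod (\<mu> t))\<^sup>2) = 1" by (simp only: of_real_eq_1_iff)
  then have sum1: "(\<Sum>j\<in>D. Pr_M \<Psi> (lam j)) = 1" by (simp add: PrM)
  show ?thesis unfolding fd_witness_def
    using on sum1 PrM cond mu by auto
qed


lemma smult_sub_rdistrib: "((a::complex) - b) *s x = a *s x - b *s x"
  by (simp add: vec_eq_iff algebra_simps)

lemma partB:
  fixes \<Psi> :: "complex ^ ('s::finite \<times> 'm::finite)"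
    and D :: "'d set" and \<phi> :: "'d \<Rightarrow> complex ^ 's" and lam :: "'d \<Rightarrow> complex ^ 'm" and \<mu> :: "'d \<Rightarrow> complex"
    and b :: "'d \<Rightarrow> complex ^ 'm"
  assumes fin: "finite D"
    and uphi: "\<And>t. t \<in> D \<Longrightarrow> unit_vec (\<phi> t)"
    and ulam: "\<And>t. t \<in> D \<Longrightarrow> unit_vec (lam t)"
    and mu: "\<And>t. t \<in> D \<Longrightarrow> \<mu> t \<noteq> 0"
    and Psi: "\<Psi> = (\<Sum>t\<in>D. \<mu> t *s tensor (\<phi> t) (lam t))"
    and uPsi: "unit_vec \<Psi>"
    and li: "lin_indep_on D \<phi>"
    and fd: "fd_witness \<Psi> D \<phi> b"
  shows "orthonormal_on D lam"
proof -
  define v where "v j = pv (b j) \<Psi>" for j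
  have onb: "orthonormal_on D b" and sumb: "(\<Sum>j\<in>D. Pr_M \<Psi> (b j)) = 1"
    and pos: "\<And>j. j \<in> D \<Longrightarrow> Pr_M \<Psi> (b j) > 0"
    and cnd: "\<And>j q. j \<in> D \<Longrightarrow> unit_vec q \<Longrightarrow> Pr_cond \<Psi> q (b j) = (cmod (cinner q (\<phi> j)))\<^sup>2"
    using fd unfolding fd_witness_def by auto
  have vphi: "v j = cinner (\<phi> j) (v j) *s \<phi> j" if j: "j \<in> D" for j
  proof (rule cs_lemma[OF uphi[OF j]])
    fix q :: "complex ^ 's" assume uq: "unit_vec q" and q0: "cinner q (\<phi> j) = 0"
    have "Pr_cond \<Psi> q (b j) = 0" using cnd[OF j uq] q0 by simp
    then have "Pr_joint \<Psi> q (b j) = 0" using pos[OF j] by (simp add: Pr_cond_def)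
    then show "cinner q (v j) = 0" by (simp add: Pr_joint_pv v_def)
  qed
  have S: "(\<Sum>j\<in>D. cinner (v j) (v j)) = 1"
  proof -
    have "(\<Sum>j\<in>D. cinner (v j) (v j)) = (\<Sum>j\<in>D. complex_of_real (Pr_M \<Psi> (b j)))"
      by (intro sum.cong refl) (simp only: Pr_M_pv v_def cinner_self_real)
    also have "\<dots> = 1" unfolding of_real_sum[symmetric] sumb by simp
    finally show ?thesis .
  qed
  define T where "T = (\<Sum>j\<in>D. tensor (v j) (b j))"
  have pvT: "pv (b j) T = v j" if j: "j \<in> D" for j
  proof -
    have "pv (b j) T = (\<Sum>k\<in>D. cinner (b j) (b k) *s v k)"
      unfolding T_def pv_sum pv_tensor ..
    also have "\<dots> = (\<Sum>k\<in>D. if k = j then v j else 0)"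
      using onb j unfolding orthonormal_on_def by (intro sum.cong refl) auto
    also have "\<dots> = v j" using fin j by simp
    finally show ?thesis .
  qed
  have TPsi: "cinner T \<Psi> = 1"
  proof -
    have "cinner T \<Psi> = (\<Sum>j\<in>D. cinner (v j) (v j))"
      unfolding T_def cinner_sum_left pv_tensor_cinner v_def ..
    then show ?thesis using S by simp
  qed
  have PsiT: "cinner \<Psi> T = 1" using TPsi cinner_cnj[of T \<Psi>] by simp
  have TT: "cinner T T = 1"
  proof -
    have "cinner T T = (\<Sum>j\<in>D. cinner (v j) (pv (b j) T))"
      unfolding T_def[of] cinner_sum_left pv_tensor_cinner by (simp add: T_def)
    also have "\<dots> = (\<Sum>j\<in>D. cinner (v j) (v j))"
      by (intro sum.cong refl) (simp add: pvT)
    finally show ?thesis using S by simp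
  qed
  have "cinner (\<Psi> - T) (\<Psi> - T) = cinner \<Psi> \<Psi> - cinner T \<Psi> - (cinner \<Psi> T - cinner T T)"
    by (simp only: cinner_diff_left cinner_diff_right)
  also have "\<dots> = 0" using TPsi PsiT TT uPsi by (simp add: unit_vec_def)
  finally have "\<Psi> - T = 0" by (simp only: cinner_self_eq0)
  then have PsiT_eq: "\<Psi> = T" by simp
  define c where "c j = cinner (\<phi> j) (v j)" for j
  have Psi2: "\<Psi> = (\<Sum>j\<in>D. c j *s tensor (\<phi> j) (b j))"
    unfolding PsiT_eq T_def
  proof (intro sum.cong refl)
    fix j assume j: "j \<in> D"
    have "tensor (v j) (b j) = tensor (c j *s \<phi> j) (b j)"
      unfolding c_def by (rule arg_cong[where f="\<lambda>x. tensor x (b j)"], rule vphi[OF j])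
    then show "tensor (v j) (b j) = c j *s tensor (\<phi> j) (b j)"
      by (simp only: tensor_scale_left)
  qed
  have coef: "\<mu> t * cinner x (lam t) = c t * cinner x (b t)" if t: "t \<in> D" for t x
  proof -
    have "(\<Sum>t\<in>D. (\<mu> t * cinner x (lam t)) *s \<phi> t) = pv x \<Psi>"
      unfolding Psi by (rule pv_Psi[symmetric])
    also have "\<dots> = (\<Sum>t\<in>D. (c t * cinner x (b t)) *s \<phi> t)"
      by (subst Psi2, rule pv_Psi)
    finally have "(\<Sum>t\<in>D. (\<mu> t * cinner x (lam t) - c t * cinner x (b t)) *s \<phi> t) = 0"
      by (simp add: smult_sub_rdistrib sum_subtractf)
    then have "\<forall>t\<in>D. \<mu> t * cinner x (lam t) - c t * cinner x (b t) = 0"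
      using spec[OF li[unfolded lin_indep_on_def], of "\<lambda>t. \<mu> t * cinner x (lam t) - c t * cinner x (b t)"]
      by (simp only: refl simp_thms)
    then show ?thesis using t by simp
  qed
  have lamb: "lam t = (c t / \<mu> t) *s b t" if t: "t \<in> D" for t
  proof -
    have "\<mu> t * lam t $ k = c t * b t $ k" for k
      using coef[OF t, of "axis k 1"] by (simp add: cinner_axis)
    then show ?thesis using mu[OF t] by (simp add: vec_eq_iff field_simps)
  qed
  show ?thesis unfolding orthonormal_on_def
  proof (intro ballI)
    fix s t assume s: "s \<in> D" and t: "t \<in> D"
    show "cinner (lam s) (lam t) = (if s = t then 1 else 0)"
    proof (cases "s = t")
      case True then show ?thesis using ulam[OF s] by (simp add: unit_vec_def)
    next
      case False
      have "cinner (b s) (b t) = 0" using onb s t False unfolding orthonormal_on_def by auto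
      then show ?thesis using False lamb[OF s] lamb[OF t] by (simp add: cinner_scale_left cinner_scale_right)
    qed
  qed
qed

theorem lemmaA3:
  fixes \<Psi> :: "complex ^ ('s::finite \<times> 'm::finite)"
    and D :: "'d set"
    and \<phi> :: "'d \<Rightarrow> complex ^ 's"
    and lam :: "'d \<Rightarrow> complex ^ 'm"
    and \<mu> :: "'d \<Rightarrow> complex"
  assumes "finite D"
    and "\<And>t. t \<in> D \<Longrightarrow> unit_vec (\<phi> t)"
    and "\<And>t. t \<in> D \<Longrightarrow> unit_vec (lam t)"
    and "\<And>t. t \<in> D \<Longrightarrow> \<mu> t \<noteq> 0"
    and "\<Psi> = (\<Sum>t\<in>D. \<mu> t *s tensor (\<phi> t) (lam t))"
    and "unit_vec \<Psi>"
  shows "(orthonormal_on D lam \<longrightarrow>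
            fd_witness \<Psi> D \<phi> lam \<and> fully_distinguishable \<Psi> D \<phi> TYPE('m) \<and>
            (\<forall>j\<in>D. \<forall>q. unit_vec q \<longrightarrow> Pr_cond \<Psi> q (lam j) = (cmod (cinner q (\<phi> j)))\<^sup>2))
       \<and> (lin_indep_on D \<phi> \<and> fully_distinguishable \<Psi> D \<phi> TYPE('m) \<longrightarrow> orthonormal_on D lam)"
proof (intro conjI impI)
  assume on: "orthonormal_on D lam"
  have fdw: "fd_witness \<Psi> D \<phi> lam" by (rule partA[OF assms(1,2,4,5,6) on])
  then show "fd_witness \<Psi> D \<phi> lam" .
  from fdw show "fully_distinguishable \<Psi> D \<phi> TYPE('m)"
    unfolding fully_distinguishable_def by blast
  from fdw show "\<forall>j\<in>D. \<forall>q. unit_vec q \<longrightarrow> Pr_cond \<Psi> q (lam j) = (cmod (cinner q (\<phi> j)))\<^sup>2"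
    unfolding fd_witness_def by blast
next
  assume h: "lin_indep_on D \<phi> \<and> fully_distinguishable \<Psi> D \<phi> TYPE('m)"
  then obtain b :: "'d \<Rightarrow> complex ^ 'm" where b: "fd_witness \<Psi> D \<phi> b"
    unfolding fully_distinguishable_def by blast
  show "orthonormal_on D lam"
    using partB[OF assms(1,2,3,4,5,6) _ b] h by blast
qed

end
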